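(* Let $(Q,\mathcal{K})$ be a partial knowledge structure with $|Q|\ge 2$, let $Q'$ be a proper non-empty subset of $Q$, and suppose $\mathcal{K}$ is $\cup$-closed. Then: (i) $K\sim\bigcup[K]$ for every $K\in\mathcal{K}$; (ii) $\mathcal{K}_{|Q'}$ is $\cup$-closed; if $\mathcal{K}$ is a knowledge space, so is $\mathcal{K}_{|Q'}$; (iii) every $Q'$-child of $\mathcal{K}$ is $\cup$-closed. Moreover the converse implications in (ii) and (iii) do not hold in general: there exist a knowledge structure $\mathcal{K}$ which is not $\cup$-closed and a subset $Q'$ such that $\mathcal{K}_{|Q'}$ and all $Q'$-children of $\mathcal{K}$ are $\cup$-closed.
   Context: All sets are finite. A partial knowledge structure is a family $\mathcal{F}$ of subsets of a set $Q$ with $Q=\bigcup\mathcal{F}\in\mathcal{F}$. A knowledge structure is a pair $(Q,\mathcal{K})$ with $Q$ non-empty, $\mathcal{K}$ a family of subsets of $Q$ containing $\varnothing$ and $Q=\bigcup\mathcal{K}$; it is a knowledge space if it is closed under union. A family is $\cup$-closed if the union of any non-empty subfamily belongs to it. For $Q'\subset Q$, $K\sim L$ iff $K\cap Q'=L\cap Q'$ ($K,L\in\mathcal{K}$); $[K]$ denotes the equivalence class of $K$. The projection is $\mathcal{K}_{|Q'}=\{K\cap Q':K\in\mathcal{K}\}$. For $K\in\mathcal{K}$, the $Q'$-child of $\mathcal{K}$ is $\mathcal{K}_{[K]}=\{L\setminus\bigcap[K] : L\in\mathcal{K},\ L\sim K\}$. *)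

theory Defs
  imports Main
begin

definition partial_knowledge_structure :: "'a set \<Rightarrow> 'a set set \<Rightarrow> bool" where
  "partial_knowledge_structure Q F \<longleftrightarrow> finite Q \<and> F \<subseteq> Pow Q \<and> \<Union>F = Q \<and> Q \<in> F"

definition knowledge_structure :: "'a set \<Rightarrow> 'a set set \<Rightarrow> bool" where
  "knowledge_structure Q K \<longleftrightarrow> finite Q \<and> Q \<noteq> {} \<and> K \<subseteq> Pow Q \<and> {} \<in> K \<and> Q \<in> K \<and> \<Union>K = Q"

definition union_closed :: "'a set set \<Rightarrow> bool" where
  "union_closed F \<longleftrightarrow> (\<forall>G. G \<subseteq> F \<and> G \<noteq> {} \<longrightarrow> \<Union>G \<in> F)"

definition knowledge_space :: "'a set \<Rightarrow> 'a set set \<Rightarrow> bool" where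
  "knowledge_space Q K \<longleftrightarrow> knowledge_structure Q K \<and> union_closed K"

text \<open>Equivalence class [X] of X w.r.t. Q' (K ~ L iff K \<inter> Q' = L \<inter> Q').\<close>
definition eq_class :: "'a set set \<Rightarrow> 'a set \<Rightarrow> 'a set \<Rightarrow> 'a set set" where
  "eq_class K Q' X = {L \<in> K. L \<inter> Q' = X \<inter> Q'}"

definition projection :: "'a set set \<Rightarrow> 'a set \<Rightarrow> 'a set set" where
  "projection K Q' = (\<lambda>L. L \<inter> Q') ` K"

definition child :: "'a set set \<Rightarrow> 'a set \<Rightarrow> 'a set \<Rightarrow> 'a set set" where
  "child K Q' X = (\<lambda>L. L - \<Inter>(eq_class K Q' X)) ` eq_class K Q' X"

end

theory Submission
  imports Defs
begin

lemma uc_bin: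
  assumes "finite F" "\<And>a b. a \<in> F \<Longrightarrow> b \<in> F \<Longrightarrow> a \<union> b \<in> F"
  shows "union_closed F"
  unfolding union_closed_def
proof (intro allI impI)
  fix G assume G: "G \<subseteq> F \<and> G \<noteq> {}"
  have "finite G" using G assms(1) finite_subset by blast
  from this G show "\<Union>G \<in> F"
  proof (induction G rule: finite_induct)
    case empty then show ?case by simp
  next
    case (insert x G)
    show ?case
    proof (cases "G = {}")
      case True then show ?thesis using insert by simp
    next
      case False
      then have "\<Union>G \<in> F" using insert by blast
      then show ?thesis using insert assms(2) by simp
    qed
  qed
qed

lemma part1:
  assumes uc: "union_closed K"
  shows "(\<forall>X\<in>K. X \<inter> Q' = \<Union>(eq_class K Q' X) \<inter> Q')
            \<and> union_closed (projection K Q')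
            \<and> (\<forall>X\<in>K. union_closed (child K Q' X))"
proof (intro conjI ballI)
  fix X assume "X \<in> K"
  then show "X \<inter> Q' = \<Union>(eq_class K Q' X) \<inter> Q'"
    unfolding eq_class_def by blast
next
  show "union_closed (projection K Q')"
    unfolding union_closed_def
  proof (intro allI impI)
    fix G assume G: "G \<subseteq> projection K Q' \<and> G \<noteq> {}"
    define f where "f g = (SOME L. L \<in> K \<and> g = L \<inter> Q')" for g
    have f: "f g \<in> K \<and> g = f g \<inter> Q'" if "g \<in> G" for g
    proof -
      have "\<exists>L. L \<in> K \<and> g = L \<inter> Q'" using that G unfolding projection_def by blast
      then show ?thesis unfolding f_def by (rule someI_ex)
    qed
    have "f ` G \<subseteq> K" using f by blast
    moreover have "f ` G \<noteq> {}" using G by blast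
    ultimately have "\<Union>(f ` G) \<in> K" using uc unfolding union_closed_def by blast
    moreover have "\<Union>(f ` G) \<inter> Q' = \<Union>G" using f by blast
    ultimately show "\<Union>G \<in> projection K Q'" unfolding projection_def by (metis image_eqI)
  qed
next
  fix X assume X: "X \<in> K"
  show "union_closed (child K Q' X)"
    unfolding union_closed_def
  proof (intro allI impI)
    fix G assume G: "G \<subseteq> child K Q' X \<and> G \<noteq> {}"
    define E where "E = eq_class K Q' X"
    define I where "I = \<Inter>E"
    define f where "f g = (SOME L. L \<in> E \<and> g = L - I)" for g
    have f: "f g \<in> E \<and> g = f g - I" if "g \<in> G" for g
    proof -
      have "\<exists>L. L \<in> E \<and> g = L - I" using that G unfolding child_def E_def I_def by blast
      then show ?thesis unfolding f_def by (rule someI_ex)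
    qed
    have "f ` G \<subseteq> K" using f unfolding E_def eq_class_def by blast
    moreover have "f ` G \<noteq> {}" using G by blast
    ultimately have "\<Union>(f ` G) \<in> K" using uc unfolding union_closed_def by blast
    moreover have "\<Union>(f ` G) \<inter> Q' = X \<inter> Q'" using f G unfolding E_def eq_class_def by blast
    ultimately have "\<Union>(f ` G) \<in> E" unfolding E_def eq_class_def by blast
    moreover have "\<Union>(f ` G) - I = \<Union>G" using f by blast
    ultimately show "\<Union>G \<in> child K Q' X" unfolding child_def E_def[symmetric] I_def[symmetric]
      by (metis image_eqI)
  qed
qed

lemma part2:
  assumes "knowledge_space Q K" "Q' \<subset> Q" "Q' \<noteq> {}"
  shows "knowledge_space Q' (projection K Q')"
proof -
  have uc: "union_closed K" using assms(1) unfolding knowledge_space_def by blast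
  have "knowledge_structure Q' (projection K Q')"
    using assms unfolding knowledge_space_def knowledge_structure_def projection_def
    by (auto intro: finite_subset)
  then show ?thesis using part1[OF uc] unfolding knowledge_space_def by blast
qed

lemma notin_K:
  assumes "X \<in> {{}, {1}, {2}, {1,2,3::nat}}" "1 \<in> X" "2 \<in> X" "3 \<notin> X"
  shows False
proof -
  have "X = {} \<or> X = {1} \<or> X = {2} \<or> X = {1,2,3}" using assms(1) by simp
  then show False using assms(2-4) by auto
qed

lemma fi: "{L \<in> insert a A. P L} = (if P a then insert a {L\<in>A. P L} else {L\<in>A. P L})" by auto

lemma eK:
  assumes "X \<in> {{}, {1}, {2}, {1,2,3::nat}}"
  shows "eq_class {{}, {1}, {2}, {1,2,3::nat}} {1} X = (if 1 \<in> X then {{1},{1,2,3}} else {{},{2}})"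
proof -
  have "X \<inter> {1} = (if 1 \<in> X then {1} else {})" by auto
  moreover have "{L \<in> {{}, {1}, {2}, {1,2,3::nat}}. L \<inter> {1} = {1}} = {{1},{1,2,3}}" by (simp only: fi) simp
  moreover have "{L \<in> {{}, {1}, {2}, {1,2,3::nat}}. L \<inter> {1} = {}} = {{},{2}}" by (simp only: fi) simp
  ultimately show ?thesis unfolding eq_class_def by simp
qed

lemma part3:
  "\<exists>(Q::nat set) K Q'.
            knowledge_structure Q K \<and> card Q \<ge> 2 \<and> Q' \<subset> Q \<and> Q' \<noteq> {} \<and>
            \<not> union_closed K \<and> union_closed (projection K Q') \<and>
            (\<forall>X\<in>K. union_closed (child K Q' X))"
proof (intro exI conjI)
  let ?K = "{{}, {1}, {2}, {1,2,3::nat}}"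
  show "knowledge_structure {1,2,3} ?K" unfolding knowledge_structure_def by auto
  show "2 \<le> card {1,2,3::nat}" by simp
  show "{1} \<subset> {1,2,3::nat}" by auto
  show "{1::nat} \<noteq> {}" by simp
  show "\<not> union_closed ?K" unfolding union_closed_def
  proof
    assume "\<forall>G. G \<subseteq> ?K \<and> G \<noteq> {} \<longrightarrow> \<Union>G \<in> ?K"
    moreover have "{{1},{2::nat}} \<subseteq> ?K \<and> {{1},{2::nat}} \<noteq> {}" by simp
    ultimately have m: "\<Union>{{1},{2::nat}} \<in> ?K" by (metis (no_types, lifting))
    have "(1::nat) \<in> \<Union>{{1},{2::nat}}" "(2::nat) \<in> \<Union>{{1},{2::nat}}" "(3::nat) \<notin> \<Union>{{1},{2::nat}}" by auto
    then show False using notin_K[OF m] by simp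
  qed
  have p: "projection ?K {1} = {{},{1}}" by (auto simp: projection_def)
  have "union_closed {{},{1::nat}}" by (rule uc_bin) auto
  then show "union_closed (projection ?K {1})" using p by simp
  show "\<forall>X\<in>?K. union_closed (child ?K {1} X)"
  proof -
    have i1: "\<Inter>{{1},{1,2,3::nat}} = {1}" by auto
    have m1: "(\<lambda>L. L - {1::nat}) ` {{1},{1,2,3}} = {{},{2,3}}" by auto
    have i2: "\<Inter>{{},{2::nat}} = {}" by auto
    have m2: "(\<lambda>L. L - ({}::nat set)) ` {{},{2}} = {{},{2}}" by auto
    have c1: "child ?K {1} X = {{},{2,3}}" if "X \<in> ?K" "1 \<in> X" for X
      using eK[OF that(1)] that(2) i1 m1 unfolding child_def by simp
    have c2: "child ?K {1} X = {{},{2}}" if "X \<in> ?K" "1 \<notin> X" for X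
      using eK[OF that(1)] that(2) i2 m2 unfolding child_def by simp
    have u1: "union_closed {{},{2,3::nat}}" by (rule uc_bin) auto
    have u2: "union_closed {{},{2::nat}}" by (rule uc_bin) auto
    show ?thesis using c1 c2 u1 u2 by metis
  qed
qed

theorem lemma3:
  shows "(\<forall>(Q::'a set) K Q'.
            partial_knowledge_structure Q K \<and> card Q \<ge> 2 \<and> Q' \<subset> Q \<and> Q' \<noteq> {} \<and> union_closed K \<longrightarrow>
              (\<forall>X\<in>K. X \<inter> Q' = \<Union>(eq_class K Q' X) \<inter> Q')
            \<and> union_closed (projection K Q')
            \<and> (knowledge_space Q K \<longrightarrow> knowledge_space Q' (projection K Q'))
            \<and> (\<forall>X\<in>K. union_closed (child K Q' X)))
       \<and> (\<exists>(Q::nat set) K Q'.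
            knowledge_structure Q K \<and> card Q \<ge> 2 \<and> Q' \<subset> Q \<and> Q' \<noteq> {} \<and>
            \<not> union_closed K \<and> union_closed (projection K Q') \<and>
            (\<forall>X\<in>K. union_closed (child K Q' X)))"
proof (rule conjI, intro allI impI)
  fix Q :: "'a set" and K Q'
  assume a: "partial_knowledge_structure Q K \<and> card Q \<ge> 2 \<and> Q' \<subset> Q \<and> Q' \<noteq> {} \<and> union_closed K"
  then have uc: "union_closed K" by simp
  show "(\<forall>X\<in>K. X \<inter> Q' = \<Union>(eq_class K Q' X) \<inter> Q')
            \<and> union_closed (projection K Q')
            \<and> (knowledge_space Q K \<longrightarrow> knowledge_space Q' (projection K Q'))
            \<and> (\<forall>X\<in>K. union_closed (child K Q' X))"
    using part1[OF uc, of Q'] part2[of Q K Q'] a by simp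
next
  show "\<exists>(Q::nat set) K Q'.
            knowledge_structure Q K \<and> card Q \<ge> 2 \<and> Q' \<subset> Q \<and> Q' \<noteq> {} \<and>
            \<not> union_closed K \<and> union_closed (projection K Q') \<and>
            (\<forall>X\<in>K. union_closed (child K Q' X))" by (rule part3)
qed

end
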